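(* For every tWF net $N$: $N$ is $*$-sound if and only if $N$ is sub-sound.
   Context: Petri nets and markings. A Petri net is a triple $(P,T,F)$ with $P$ a finite set of places, $T$ a finite set of transitions, $P\cap T=\emptyset$, and $F\subseteq (P\times T)\cup(T\times P)$. For a node $x$, $\bullet x=\{y\mid (y,x)\in F\}$, $x\bullet=\{y\mid (x,y)\in F\}$. A marking is a multiset over $P$ (a function $P\to\mathbb N$); sets of places are identified with bags of multiplicity one, $+,-,\le$ are pointwise, and $k.m$ is the sum of $k$ copies of $m$. Transition $t$ is enabled at $m$ iff $\bullet t\le m$, firing gives $m-\bullet t+t\bullet$, and $m\xrightarrow{*}m'$ denotes reachability by a finite (possibly empty) firing sequence. Workflow nets. A pWF net is $(P,T,F,I,O)$ with $(P,T,F)$ a Petri net, $I,O\subseteq P$ non-empty, every node reachable by a directed path from some node of $I$, and some node of $O$ reachable from every node. A tWF net is the same with $I,O$ non-empty subsets of $T$. Input nodes may have incoming edges and output nodes outgoing edges. The place-completion $\mathrm{pc}(N)$ of a tWF net $N=(P,T,F,I,O)$ is obtained by adding two fresh places $p_i,p_o$ with edges $(p_i,t)$ for all $t\in I$ and $(t,p_o)$ for all $t\in O$, and taking input set $\{p_i\}$ and output set $\{p_o\}$. Soundness. A pWF net is $k$-sound if for every marking $m$ with $k.I\xrightarrow{*}m$ we have $m\xrightarrow{*}k.O$; $*$-sound if $k$-sound for all $k\ge1$; sub-sound if for all integers $k\ge k'\ge 0$ and every marking $m'$: $k.I\xrightarrow{*}m'+k'.O$ implies $m'\xrightarrow{*}(k-k').O$.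 A tWF net is $*$-sound (resp. sub-sound) iff its place-completion is. *)

theory Defs
  imports Main "HOL-Library.Function_Algebras"
begin

definition petri_net :: "'n set \<Rightarrow> 'n set \<Rightarrow> ('n \<times> 'n) set \<Rightarrow> bool" where
  "petri_net P T F \<longleftrightarrow> finite P \<and> finite T \<and> P \<inter> T = {} \<and> F \<subseteq> (P \<times> T) \<union> (T \<times> P)"

definition preset :: "('n \<times> 'n) set \<Rightarrow> 'n \<Rightarrow> 'n set" where
  "preset F x = {y. (y, x) \<in> F}"

definition postset :: "('n \<times> 'n) set \<Rightarrow> 'n \<Rightarrow> 'n set" where
  "postset F x = {y. (x, y) \<in> F}"

text \<open>Markings are multisets over places, represented as functions to nat
(pointwise +, -, \<le>). A set is identified with its multiplicity-one bag.\<close>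

type_synonym 'n marking = "'n \<Rightarrow> nat"

definition bag_of :: "'n set \<Rightarrow> 'n marking" where
  "bag_of A = (\<lambda>p. if p \<in> A then 1 else 0)"

definition scale :: "nat \<Rightarrow> 'n marking \<Rightarrow> 'n marking" where
  "scale k m = (\<lambda>p. k * m p)"

definition enabled :: "('n \<times> 'n) set \<Rightarrow> 'n marking \<Rightarrow> 'n \<Rightarrow> bool" where
  "enabled F m t \<longleftrightarrow> bag_of (preset F t) \<le> m"

definition fire :: "('n \<times> 'n) set \<Rightarrow> 'n marking \<Rightarrow> 'n \<Rightarrow> 'n marking" where
  "fire F m t = m - bag_of (preset F t) + bag_of (postset F t)"

definition step :: "'n set \<Rightarrow> ('n \<times> 'n) set \<Rightarrow> 'n marking \<Rightarrow> 'n marking \<Rightarrow> bool" where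
  "step T F m m' \<longleftrightarrow> (\<exists>t\<in>T. enabled F m t \<and> m' = fire F m t)"

definition reach :: "'n set \<Rightarrow> ('n \<times> 'n) set \<Rightarrow> 'n marking \<Rightarrow> 'n marking \<Rightarrow> bool" where
  "reach T F = (step T F)\<^sup>*\<^sup>*"

definition wf_connected :: "'n set \<Rightarrow> 'n set \<Rightarrow> ('n \<times> 'n) set \<Rightarrow> 'n set \<Rightarrow> 'n set \<Rightarrow> bool" where
  "wf_connected P T F In Out \<longleftrightarrow>
     In \<noteq> {} \<and> Out \<noteq> {} \<and>
     (\<forall>x \<in> P \<union> T. \<exists>i \<in> In. (i, x) \<in> F\<^sup>*) \<and>
     (\<forall>x \<in> P \<union> T. \<exists>q \<in> Out. (x, q) \<in> F\<^sup>*)"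

definition pWF_net :: "'n set \<Rightarrow> 'n set \<Rightarrow> ('n \<times> 'n) set \<Rightarrow> 'n set \<Rightarrow> 'n set \<Rightarrow> bool" where
  "pWF_net P T F In Out \<longleftrightarrow> petri_net P T F \<and> In \<subseteq> P \<and> Out \<subseteq> P \<and> wf_connected P T F In Out"

definition tWF_net :: "'n set \<Rightarrow> 'n set \<Rightarrow> ('n \<times> 'n) set \<Rightarrow> 'n set \<Rightarrow> 'n set \<Rightarrow> bool" where
  "tWF_net P T F In Out \<longleftrightarrow> petri_net P T F \<and> In \<subseteq> T \<and> Out \<subseteq> T \<and> wf_connected P T F In Out"

definition k_sound :: "nat \<Rightarrow> 'n set \<Rightarrow> ('n \<times> 'n) set \<Rightarrow> 'n set \<Rightarrow> 'n set \<Rightarrow> bool" where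
  "k_sound k T F In Out \<longleftrightarrow>
     (\<forall>m. reach T F (scale k (bag_of In)) m \<longrightarrow> reach T F m (scale k (bag_of Out)))"

definition star_sound :: "'n set \<Rightarrow> ('n \<times> 'n) set \<Rightarrow> 'n set \<Rightarrow> 'n set \<Rightarrow> bool" where
  "star_sound T F In Out \<longleftrightarrow> (\<forall>k\<ge>1. k_sound k T F In Out)"

definition sub_sound :: "'n set \<Rightarrow> ('n \<times> 'n) set \<Rightarrow> 'n set \<Rightarrow> 'n set \<Rightarrow> bool" where
  "sub_sound T F In Out \<longleftrightarrow>
     (\<forall>k k' m'. k' \<le> k \<longrightarrow>
        reach T F (scale k (bag_of In)) (m' + scale k' (bag_of Out)) \<longrightarrow>
        reach T F m' (scale (k - k') (bag_of Out)))"

datatype 'n pc_node = Orig 'n | PIn | POut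

definition pc_places :: "'n set \<Rightarrow> 'n pc_node set" where
  "pc_places P = Orig ` P \<union> {PIn, POut}"

definition pc_trans :: "'n set \<Rightarrow> 'n pc_node set" where
  "pc_trans T = Orig ` T"

definition pc_flow :: "('n \<times> 'n) set \<Rightarrow> 'n set \<Rightarrow> 'n set \<Rightarrow> ('n pc_node \<times> 'n pc_node) set" where
  "pc_flow F In Out = map_prod Orig Orig ` F \<union> {(PIn, Orig t) | t. t \<in> In} \<union> {(Orig t, POut) | t. t \<in> Out}"

text \<open>A tWF net is *-sound (sub-sound) iff its place-completion is.\<close>
definition tWF_star_sound :: "'n set \<Rightarrow> 'n set \<Rightarrow> ('n \<times> 'n) set \<Rightarrow> 'n set \<Rightarrow> 'n set \<Rightarrow> bool" where
  "tWF_star_sound P T F In Out \<longleftrightarrow> star_sound (pc_trans T) (pc_flow F In Out) {PIn} {POut}"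

definition tWF_sub_sound :: "'n set \<Rightarrow> 'n set \<Rightarrow> ('n \<times> 'n) set \<Rightarrow> 'n set \<Rightarrow> 'n set \<Rightarrow> bool" where
  "tWF_sub_sound P T F In Out \<longleftrightarrow> sub_sound (pc_trans T) (pc_flow F In Out) {PIn} {POut}"

end

theory Submission
  imports Defs
begin

lemma shift_reach:
  assumes noq: "\<And>t. t \<in> T \<Longrightarrow> q \<notin> preset F t"
    and c_def: "c = (\<lambda>p. if p = q then n else 0)"
    and r: "reach T F (m + c) x"
  shows "\<exists>y. x = y + c \<and> reach T F m y"
  using r[unfolded reach_def]
proof (induction rule: rtranclp_induct)
  case base
  then show ?case by (auto simp: reach_def)
next
  case (step x x')
  then obtain y where xy: "x = y + c" and ry: "reach T F m y" by blast
  from step(2) obtain t where tT: "t \<in> T" and en: "enabled F x t" and x': "x' = fire F x t"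
    unfolding step_def by blast
  have qn: "q \<notin> preset F t" using noq tT .
  have en2: "enabled F y t"
    unfolding enabled_def le_fun_def
  proof
    fix p
    show "bag_of (preset F t) p \<le> y p"
    proof (cases "p = q")
      case True then show ?thesis using qn by (simp add: bag_of_def)
    next
      case False
      have "bag_of (preset F t) p \<le> x p" using en by (simp add: enabled_def le_fun_def)
      then show ?thesis using False xy c_def by simp
    qed
  qed
  have "x' = fire F y t + c"
    unfolding x' fire_def xy
  proof
    fix p
    show "(y + c - bag_of (preset F t) + bag_of (postset F t)) p =
          (y - bag_of (preset F t) + bag_of (postset F t) + c) p"
      using qn c_def by (cases "p = q") (auto simp: bag_of_def)
  qed
  moreover have "step T F y (fire F y t)" using tT en2 unfolding step_def by blast
  then have "reach T F m (fire F y t)"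
    using ry unfolding reach_def by (meson rtranclp.rtrancl_into_rtrancl)
  ultimately show ?case by blast
qed

lemma zero_reach:
  assumes ne: "\<And>t. t \<in> T \<Longrightarrow> preset F t \<noteq> {}"
    and r: "reach T F (\<lambda>_. 0) x"
  shows "x = (\<lambda>_. 0)"
  using r[unfolded reach_def]
proof (induction rule: rtranclp_induct)
  case base then show ?case by simp
next
  case (step x x')
  then obtain t where tT: "t \<in> T" and en: "enabled F (\<lambda>_. 0) t"
    unfolding step_def by blast
  obtain p where "p \<in> preset F t" using ne[OF tT] by blast
  then have "bag_of (preset F t) p = 1" by (simp add: bag_of_def)
  moreover have "bag_of (preset F t) p \<le> 0" using en by (simp add: enabled_def le_fun_def)
  ultimately show ?case by simp
qed

lemma pc_noPOut: "POut \<notin> preset (pc_flow F In Out) t"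
  by (auto simp: preset_def pc_flow_def)

lemma pc_ne:
  assumes "tWF_net P T F In Out" and "t \<in> pc_trans T"
  shows "preset (pc_flow F In Out) t \<noteq> {}"
proof -
  obtain s where s: "t = Orig s" "s \<in> T" using assms(2) by (auto simp: pc_trans_def)
  show ?thesis
  proof (cases "s \<in> In")
    case True
    then have "PIn \<in> preset (pc_flow F In Out) t" using s by (auto simp: preset_def pc_flow_def)
    then show ?thesis by blast
  next
    case False
    from assms(1) s(2) obtain i where i: "i \<in> In" "(i, s) \<in> F\<^sup>*"
      unfolding tWF_net_def wf_connected_def by blast
    then have "i \<noteq> s" using False by blast
    with i(2) obtain y where "(y, s) \<in> F" by (metis rtranclE)
    then have "Orig y \<in> preset (pc_flow F In Out) t" using s by (auto simp: preset_def pc_flow_def)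
    then show ?thesis by blast
  qed
qed

theorem mainTheorem7:
  fixes P T :: "'n set" and F :: "('n \<times> 'n) set" and In Out :: "'n set"
  assumes "tWF_net P T F In Out"
  shows "tWF_star_sound P T F In Out \<longleftrightarrow> tWF_sub_sound P T F In Out"
proof
  let ?T = "pc_trans T" and ?F = "pc_flow F In Out"
  assume "tWF_sub_sound P T F In Out"
  then show "tWF_star_sound P T F In Out"
    unfolding tWF_sub_sound_def tWF_star_sound_def sub_sound_def star_sound_def k_sound_def
  proof (intro allI impI)
    fix k :: nat and m
    assume H: "\<forall>k k' m'. k' \<le> k \<longrightarrow>
        reach ?T ?F (scale k (bag_of {PIn})) (m' + scale k' (bag_of {POut})) \<longrightarrow>
        reach ?T ?F m' (scale (k - k') (bag_of {POut}))"
      and r: "reach ?T ?F (scale k (bag_of {PIn})) m"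
    have z: "m + scale 0 (bag_of {POut}) = m" by (simp add: scale_def zero_fun_def)
    show "reach ?T ?F m (scale k (bag_of {POut}))"
      using H[rule_format, of 0 k m] r z by simp
  qed
next
  let ?T = "pc_trans T" and ?F = "pc_flow F In Out"
  assume ss: "tWF_star_sound P T F In Out"
  show "tWF_sub_sound P T F In Out"
    unfolding tWF_sub_sound_def sub_sound_def
  proof (intro allI impI)
    fix k k' m'
    assume kk: "k' \<le> k" and r: "reach ?T ?F (scale k (bag_of {PIn})) (m' + scale k' (bag_of {POut}))"
    show "reach ?T ?F m' (scale (k - k') (bag_of {POut}))"
    proof (cases "k = 0")
      case True
      then have "scale k (bag_of {PIn}) = (\<lambda>_. 0)" by (simp add: scale_def)
      then have r0: "reach ?T ?F (\<lambda>_. 0) (m' + scale k' (bag_of {POut}))"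
        using r by (subst (asm) \<open>scale k (bag_of {PIn}) = (\<lambda>_. 0)\<close>)
      have "m' + scale k' (bag_of {POut}) = (\<lambda>_. 0)"
        by (rule zero_reach[OF pc_ne[OF assms] r0])
      then have "m' = (\<lambda>_. 0)" by (metis add_is_0 plus_fun_apply)
      moreover have "scale (k - k') (bag_of {POut::'n pc_node}) = (\<lambda>_. 0)" using True by (simp add: scale_def)
      ultimately show ?thesis unfolding reach_def by (simp only:)
    next
      case False
      then have "k_sound k ?T ?F {PIn} {POut}" using ss
        by (simp add: tWF_star_sound_def star_sound_def)
      then have r2: "reach ?T ?F (m' + scale k' (bag_of {POut})) (scale k (bag_of {POut}))"
        using r by (simp add: k_sound_def)
      have cdef: "scale k' (bag_of {POut}) = (\<lambda>p. if p = POut then k' else 0)"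
        by (auto simp: scale_def bag_of_def)
      obtain y where y: "scale k (bag_of {POut}) = y + scale k' (bag_of {POut})" and ry: "reach ?T ?F m' y"
        using shift_reach[OF pc_noPOut cdef r2] by blast
      have "y = scale (k - k') (bag_of {POut})"
      proof
        fix p
        have "k * bag_of {POut} p = y p + k' * bag_of {POut} p"
          using fun_cong[OF y, of p] by (simp add: scale_def)
        then show "y p = scale (k - k') (bag_of {POut}) p"
          by (auto simp: scale_def bag_of_def split: if_splits)
      qed
      then show ?thesis using ry by simp
    qed
  qed
qed

end
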